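(* Let $\mathcal F=\{f_\lambda\}_{\lambda\in\Lambda}\subseteq l^\infty(\mathbb N)$ for an index set $\Lambda$, let $\mathcal A_0$ be the unital C*-algebra generated by $\mathcal F$, and let $\mathcal A_{\mathcal F}$ be the smallest $\sigma_A$-invariant C*-subalgebra of $l^\infty(\mathbb N)$ containing $\mathcal A_0$, with maximal ideal space $X_{\mathcal F}$. Then: (i) For $n\in\mathbb N$ put $z_n=(f_\lambda(n))_{\lambda\in\Lambda}\in\prod_{\lambda}\overline{f_\lambda(\mathbb N)}$ and let $X_0$ be the closure of $\{z_n:n\in\mathbb N\}$ in this product. Then $\mathcal A_0\cong C(X_0)$, via $g\mapsto (n\mapsto g(z_n))$. (ii) Put $\kappa_n=(z_n,z_{n+1},\ldots)\in X_0^{\mathbb N}$ and let $Y_{\mathcal F}$ be the closure of $\{\kappa_n:n\in\mathbb N\}$ in $X_0^{\mathbb N}$. Then $\mathcal A_{\mathcal F}\cong C(Y_{\mathcal F})$, via $h\mapsto(n\mapsto h(\kappa_n))$. (iii) Let $B$ be the shift $(\omega_0,\omega_1,\ldots)\mapsto(\omega_1,\omega_2,\ldots)$ on $X_0^{\mathbb N}$ and $B_{\mathcal F}=B|_{Y_{\mathcal F}}$. Then there is a homeomorphism $X_{\mathcal F}\to Y_{\mathcal F}$ sending $\iota(n)$ to $\kappa_n$ for all $n$ and conjugating the map $A$ on $X_{\mathcal F}$ to $B_{\mathcal F}$. In particular $\mathrm{AE}(\mathcal F)=h(B_{\mathcal F})$.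
   Context: $\mathbb N=\{0,1,2,\ldots\}$, $l^\infty(\mathbb N)$ the bounded complex functions on $\mathbb N$, $(\sigma_Af)(n)=f(n+1)$; $\overline{f(\mathbb N)}$ is the closure of $f(\mathbb N)$ in $\mathbb C$; products carry the product topology. For an anqie (unital $\sigma_A$-invariant C*-subalgebra) $\mathcal A$ with maximal ideal space $X$, $\iota(n)\in X$ is evaluation at $n$ and $A:X\to X$, $(A\rho)(f)=\rho(\sigma_Af)$, is the continuous map with $A\iota(n)=\iota(n+1)$; $\mathrm{AE}(\mathcal F)=h(A)$ for $\mathcal A=\mathcal A_{\mathcal F}$, where $h$ is topological entropy. *)

theory Defs
  imports "HOL-Analysis.Analysis"
begin

text \<open>Elements of l-infinity(N) are bounded functions nat => complex, with pointwise
operations, complex conjugation as involution and the sup norm.\<close>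

definition bounded_seq :: "(nat \<Rightarrow> complex) \<Rightarrow> bool" where
  "bounded_seq f \<longleftrightarrow> bounded (range f)"

definition unital_cstar_subalg :: "(nat \<Rightarrow> complex) set \<Rightarrow> bool" where
  "unital_cstar_subalg S \<longleftrightarrow>
     (\<forall>f\<in>S. bounded_seq f) \<and>
     (\<lambda>_. 1) \<in> S \<and>
     (\<forall>f\<in>S. \<forall>g\<in>S. (\<lambda>n. f n + g n) \<in> S) \<and>
     (\<forall>f\<in>S. \<forall>g\<in>S. (\<lambda>n. f n * g n) \<in> S) \<and>
     (\<forall>c. \<forall>f\<in>S. (\<lambda>n. c * f n) \<in> S) \<and>
     (\<forall>f\<in>S. (\<lambda>n. cnj (f n)) \<in> S) \<and>
     (\<forall>gs g. (\<forall>k. gs k \<in> S) \<and> uniform_limit UNIV gs g sequentially \<longrightarrow> g \<in> S)"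

definition shiftA :: "(nat \<Rightarrow> complex) \<Rightarrow> (nat \<Rightarrow> complex)" where
  "shiftA f = (\<lambda>n. f (Suc n))"

definition shift_invariant :: "(nat \<Rightarrow> complex) set \<Rightarrow> bool" where
  "shift_invariant S \<longleftrightarrow> (\<forall>f\<in>S. shiftA f \<in> S)"

definition cstar_gen :: "(nat \<Rightarrow> complex) set \<Rightarrow> (nat \<Rightarrow> complex) set" where
  "cstar_gen F = \<Inter> {S. unital_cstar_subalg S \<and> F \<subseteq> S}"

definition anqie_gen :: "(nat \<Rightarrow> complex) set \<Rightarrow> (nat \<Rightarrow> complex) set" where
  "anqie_gen F = \<Inter> {S. unital_cstar_subalg S \<and> shift_invariant S \<and> F \<subseteq> S}"

definition characters :: "(nat \<Rightarrow> complex) set \<Rightarrow> ((nat \<Rightarrow> complex) \<Rightarrow> complex) set" where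
  "characters \<A> = {\<rho> \<in> extensional \<A>.
       (\<forall>f\<in>\<A>. \<forall>g\<in>\<A>. \<rho> (\<lambda>n. f n + g n) = \<rho> f + \<rho> g) \<and>
       (\<forall>f\<in>\<A>. \<forall>g\<in>\<A>. \<rho> (\<lambda>n. f n * g n) = \<rho> f * \<rho> g) \<and>
       (\<forall>c. \<forall>f\<in>\<A>. \<rho> (\<lambda>n. c * f n) = c * \<rho> f) \<and>
       \<rho> (\<lambda>_. 1) = 1}"

text \<open>Weak-* (Gelfand) topology: topology of pointwise convergence on \<A>.\<close>
definition max_ideal_space :: "(nat \<Rightarrow> complex) set \<Rightarrow> ((nat \<Rightarrow> complex) \<Rightarrow> complex) topology" where
  "max_ideal_space \<A> = subtopology (product_topology (\<lambda>_. euclidean) \<A>) (characters \<A>)"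

definition iota :: "(nat \<Rightarrow> complex) set \<Rightarrow> nat \<Rightarrow> ((nat \<Rightarrow> complex) \<Rightarrow> complex)" where
  "iota \<A> n = restrict (\<lambda>f. f n) \<A>"

definition mapA :: "(nat \<Rightarrow> complex) set \<Rightarrow> ((nat \<Rightarrow> complex) \<Rightarrow> complex) \<Rightarrow> ((nat \<Rightarrow> complex) \<Rightarrow> complex)" where
  "mapA \<A> \<rho> = restrict (\<lambda>f. \<rho> (shiftA f)) \<A>"

definition join_iter :: "'a topology \<Rightarrow> ('a \<Rightarrow> 'a) \<Rightarrow> 'a set set \<Rightarrow> nat \<Rightarrow> 'a set set" where
  "join_iter X T U n = {topspace X \<inter> (\<Inter>i<n. (T ^^ i) -` V i) | V. \<forall>i<n. V i \<in> U}"

definition cover_number :: "'a topology \<Rightarrow> 'a set set \<Rightarrow> nat" where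
  "cover_number X V = Inf {card W | W. W \<subseteq> V \<and> finite W \<and> topspace X \<subseteq> \<Union> W}"

definition cover_entropy :: "'a topology \<Rightarrow> ('a \<Rightarrow> 'a) \<Rightarrow> 'a set set \<Rightarrow> real" where
  "cover_entropy X T U = lim (\<lambda>n. ln (real (cover_number X (join_iter X T U n))) / real n)"

definition topological_entropy :: "'a topology \<Rightarrow> ('a \<Rightarrow> 'a) \<Rightarrow> ereal" where
  "topological_entropy X T =
     (SUP U \<in> {U. (\<forall>V\<in>U. openin X V) \<and> topspace X \<subseteq> \<Union> U}. ereal (cover_entropy X T U))"

definition anqie_entropy :: "(nat \<Rightarrow> complex) set \<Rightarrow> ereal" where
  "anqie_entropy F = topological_entropy (max_ideal_space (anqie_gen F)) (mapA (anqie_gen F))"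

end

theory Submission
  imports Defs
begin

class hs = topological_space +
  assumes hs_sep: "x \<noteq> y \<Longrightarrow> \<exists>U V. open U \<and> open V \<and> x \<in> U \<and> y \<in> V \<and> U \<inter> V = {}"

instance complex :: hs
  by standard (use hausdorff in blast)

instance "fun" :: (type, hs) hs
proof
  fix x y :: "'a \<Rightarrow> 'b" assume "x \<noteq> y"
  then obtain i where i: "x i \<noteq> y i" by (auto simp: fun_eq_iff)
  obtain U V where UV: "open U" "open V" "x i \<in> U" "y i \<in> V" "U \<inter> V = {}"
    using hs_sep[OF i] by blast
  have c: "continuous_on UNIV (\<lambda>f::'a\<Rightarrow>'b. f i)" by simp
  have "open ((\<lambda>f::'a\<Rightarrow>'b. f i) -` U)" "open ((\<lambda>f::'a\<Rightarrow>'b. f i) -` V)"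
    using UV c by (auto intro: open_vimage)
  then show "\<exists>U V. open U \<and> open V \<and> x \<in> U \<and> y \<in> V \<and> U \<inter> V = {}"
    using UV by (intro exI[of _ "(\<lambda>f::'a\<Rightarrow>'b. f i) -` U"] exI[of _ "(\<lambda>f::'a\<Rightarrow>'b. f i) -` V"]) auto
qed

typedef 'a wr = "UNIV :: 'a set" by auto

lemma surj_Rep_wr: "surj Rep_wr"
  using type_definition.Rep_range[OF type_definition_wr] by simp

instantiation wr :: (topological_space) topological_space
begin
definition open_wr :: "'a wr set \<Rightarrow> bool" where "open_wr S = open (Rep_wr ` S)"
instance
proof
  show "open (UNIV :: 'a wr set)" unfolding open_wr_def
    by (simp add: surj_Rep_wr)
  fix S T :: "'a wr set"
  assume "open S" "open T"
  moreover have "Rep_wr ` (S \<inter> T) = Rep_wr ` S \<inter> Rep_wr ` T"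
    by (rule image_Int) (meson Rep_wr_inject injI)
  ultimately show "open (S \<inter> T)" unfolding open_wr_def by auto
next
  fix K :: "'a wr set set"
  assume "\<forall>S\<in>K. open S"
  then show "open (\<Union>K)" unfolding open_wr_def image_Union by (intro open_Union) auto
qed
end

instance wr :: (hs) t2_space
proof
  fix x y :: "'a wr" assume "x \<noteq> y"
  then have xy: "Rep_wr x \<noteq> Rep_wr y" by (simp add: Rep_wr_inject)
  obtain U V where UV: "open U" "open V" "Rep_wr x \<in> U" "Rep_wr y \<in> V" "U \<inter> V = {}"
    using hs_sep[OF xy] by blast
  have o: "open (Rep_wr -` W)" if "open W" for W
  proof -
    have "Rep_wr ` (Rep_wr -` W) = W" using surj_Rep_wr by (rule surj_image_vimage_eq)
    then show ?thesis unfolding open_wr_def using that by simp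
  qed
  show "\<exists>U V. open U \<and> open V \<and> x \<in> U \<and> y \<in> V \<and> U \<inter> V = {}"
    using UV o by (intro exI[of _ "Rep_wr -` U"] exI[of _ "Rep_wr -` V"]) auto
qed

lemma Rep_wr_cont: "continuous_on (UNIV :: 'a::topological_space wr set) Rep_wr"
  unfolding continuous_on_open_vimage[OF open_UNIV]
proof (intro allI impI)
  fix W :: "'a set" assume "open W"
  have "Rep_wr ` (Rep_wr -` W \<inter> UNIV) = W" by (simp add: surj_Rep_wr image_vimage_eq)
  then show "open (Rep_wr -` W \<inter> UNIV)" unfolding open_wr_def using \<open>open W\<close> by simp
qed

lemma Abs_wr_cont: "continuous_on (UNIV::'a::topological_space set) (Abs_wr :: 'a \<Rightarrow> 'a wr)"
  unfolding continuous_on_open_vimage[OF open_UNIV]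
proof (intro allI impI)
  fix W :: "'a wr set" assume "open W"
  have "Abs_wr -` W \<inter> UNIV = Rep_wr ` W"
  proof (intro set_eqI iffI)
    fix x assume "x \<in> Abs_wr -` W \<inter> UNIV"
    then have "Abs_wr x \<in> W" by simp
    then show "x \<in> Rep_wr ` W"
      by (rule image_eqI[of x Rep_wr "Abs_wr x", rotated]) (simp add: Abs_wr_inverse)
  next
    fix x assume "x \<in> Rep_wr ` W"
    then obtain w where "w \<in> W" "x = Rep_wr w" by auto
    then show "x \<in> Abs_wr -` W \<inter> UNIV" by (simp add: Rep_wr_inverse)
  qed
  then show "open (Abs_wr -` W \<inter> UNIV)" using \<open>open W\<close> unfolding open_wr_def by simp
qed

lemma SW_hs:
  fixes R :: "('a::hs \<Rightarrow> real) set" and S :: "'a set"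
  assumes compact: "compact S"
  assumes continuous: "\<And>f. f \<in> R \<Longrightarrow> continuous_on S f"
  assumes add: "\<And>f g. f \<in> R \<Longrightarrow> g \<in> R \<Longrightarrow> (\<lambda>x. f x + g x) \<in> R"
  assumes mult: "\<And>f g. f \<in> R \<Longrightarrow> g \<in> R \<Longrightarrow> (\<lambda>x. f x * g x) \<in> R"
  assumes const: "\<And>c. (\<lambda>_. c) \<in> R"
  assumes separable: "\<And>x y. x \<in> S \<Longrightarrow> y \<in> S \<Longrightarrow> x \<noteq> y \<Longrightarrow> \<exists>f\<in>R. f x \<noteq> f y"
  assumes f: "continuous_on S f" and e: "e > 0"
  shows "\<exists>g \<in> R. \<forall>x\<in>S. \<bar>f x - g x\<bar> < e"
proof -
  have eqS: "Rep_wr -` S = Abs_wr ` S"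
    by (auto simp: Abs_wr_inverse image_iff) (metis Rep_wr_inverse)
  have cR: "continuous_on (Rep_wr -` S) (h \<circ> Rep_wr)" if "continuous_on S h" for h :: "'a \<Rightarrow> real"
    by (rule continuous_on_compose[OF continuous_on_subset[OF Rep_wr_cont]]) 
       (auto intro: continuous_on_subset[OF that])
  interpret fr: function_ring_on "(\<lambda>r. r \<circ> Rep_wr) ` R" "Rep_wr -` S"
  proof
    show "compact (Rep_wr -` S)" unfolding eqS
      by (rule compact_continuous_image[OF continuous_on_subset[OF Abs_wr_cont] compact]) simp
    show "f \<in> (\<lambda>r. r \<circ> Rep_wr) ` R \<Longrightarrow> continuous_on (Rep_wr -` S) f" for f
      using cR continuous by blast
    show "(\<lambda>x. f x + g x) \<in> (\<lambda>r. r \<circ> Rep_wr) ` R" if "f \<in> (\<lambda>r. r \<circ> Rep_wr) ` R" "g \<in> (\<lambda>r. r \<circ> Rep_wr) ` R" for f g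
      using that add by (auto simp: image_iff comp_def; blast)
    show "(\<lambda>x. f x * g x) \<in> (\<lambda>r. r \<circ> Rep_wr) ` R" if "f \<in> (\<lambda>r. r \<circ> Rep_wr) ` R" "g \<in> (\<lambda>r. r \<circ> Rep_wr) ` R" for f g
      using that mult by (auto simp: image_iff comp_def; blast)
    show "(\<lambda>_. c) \<in> (\<lambda>r. r \<circ> Rep_wr) ` R" for c
      using const[of c] by (auto simp: image_iff comp_def; blast)
    show "\<exists>f\<in>(\<lambda>r. r \<circ> Rep_wr) ` R. f x \<noteq> f y" if "x \<in> Rep_wr -` S" "y \<in> Rep_wr -` S" "x \<noteq> y" for x y
      using separable[of "Rep_wr x" "Rep_wr y"] that by (auto simp: Rep_wr_inject)
  qed
  obtain g where "g \<in> (\<lambda>r. r \<circ> Rep_wr) ` R" "\<forall>x\<in>Rep_wr -` S. \<bar>(f \<circ> Rep_wr) x - g x\<bar> < e"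
    using fr.Stone_Weierstrass_basic[OF cR[OF f] e] by blast
  then obtain r where r: "r \<in> R" "\<forall>x\<in>Rep_wr -` S. \<bar>f (Rep_wr x) - r (Rep_wr x)\<bar> < e" by auto
  then show ?thesis
  proof (intro bexI[of _ r] ballI)
    fix x assume "x \<in> S"
    then have "Abs_wr x \<in> Rep_wr -` S" by (simp add: Abs_wr_inverse)
    then have "\<bar>f (Rep_wr (Abs_wr x)) - r (Rep_wr (Abs_wr x))\<bar> < e" using r(2) by blast
    then show "\<bar>f x - r x\<bar> < e" by (simp add: Abs_wr_inverse)
  qed (use r in blast)
qed


lemma ucs_one: "unital_cstar_subalg S \<Longrightarrow> (\<lambda>_. 1) \<in> S"
  and ucs_add: "unital_cstar_subalg S \<Longrightarrow> f \<in> S \<Longrightarrow> g \<in> S \<Longrightarrow> (\<lambda>n. f n + g n) \<in> S"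
  and ucs_mult: "unital_cstar_subalg S \<Longrightarrow> f \<in> S \<Longrightarrow> g \<in> S \<Longrightarrow> (\<lambda>n. f n * g n) \<in> S"
  and ucs_smult: "unital_cstar_subalg S \<Longrightarrow> f \<in> S \<Longrightarrow> (\<lambda>n. c * f n) \<in> S"
  and ucs_cnj: "unital_cstar_subalg S \<Longrightarrow> f \<in> S \<Longrightarrow> (\<lambda>n. cnj (f n)) \<in> S"
  and ucs_lim: "unital_cstar_subalg S \<Longrightarrow> (\<And>k. gs k \<in> S) \<Longrightarrow> uniform_limit UNIV gs g sequentially \<Longrightarrow> g \<in> S"
  unfolding unital_cstar_subalg_def by blast+

lemma ucs_const: "unital_cstar_subalg S \<Longrightarrow> (\<lambda>_. c) \<in> S"
  using ucs_smult[OF _ ucs_one, of S c] by simp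

locale seqsp =
  fixes p :: "nat \<Rightarrow> 'a::hs" and K :: "'a set"
  assumes K_eq: "K = closure (range p)" and K_compact: "compact K"
begin

definition Alg :: "(nat \<Rightarrow> complex) set" where
  "Alg = (\<lambda>g. g \<circ> p) ` {g. continuous_on K g}"

lemma Alg_iff: "f \<in> Alg \<longleftrightarrow> (\<exists>g. continuous_on K g \<and> f = g \<circ> p)"
  unfolding Alg_def by auto

lemma p_in: "p n \<in> K"
  unfolding K_eq by (rule closure_subset[THEN subsetD]) simp

lemma K_closed: "closed K"
  by (simp add: K_eq)

lemma dense_le:
  fixes d :: "'a \<Rightarrow> real"
  assumes d: "continuous_on K d" and le: "\<And>n. d (p n) \<le> c" and x: "x \<in> K"
  shows "d x \<le> c"
proof -
  have "closed {x \<in> K. d x \<le> (\<lambda>_. c) x}"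
    by (rule continuous_on_closed_Collect_le[OF d continuous_on_const K_closed])
  moreover have "range p \<subseteq> {x\<in>K. d x \<le> c}" using le p_in by auto
  ultimately have "closure (range p) \<subseteq> {x\<in>K. d x \<le> c}" by (intro closure_minimal) auto
  then show ?thesis using x K_eq by auto
qed

lemma uniq:
  fixes g h :: "'a \<Rightarrow> complex"
  assumes "continuous_on K g" "continuous_on K h" "g \<circ> p = h \<circ> p" "x \<in> K"
  shows "g x = h x"
proof -
  have "norm (g x - h x) \<le> 0"
  proof (rule dense_le[where d="\<lambda>x. norm (g x - h x)"])
    show "continuous_on K (\<lambda>x. norm (g x - h x))" using assms by (intro continuous_intros)
    show "norm (g (p n) - h (p n)) \<le> 0" for n using assms(3) by (metis comp_apply norm_zero order_refl right_minus_eq)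
  qed fact
  then show ?thesis by simp
qed

lemma Alg_bounded: "continuous_on K g \<Longrightarrow> bounded_seq (g \<circ> p)"
  unfolding bounded_seq_def
  by (rule bounded_subset[OF compact_imp_bounded[OF compact_continuous_image[OF _ K_compact]]])
     (auto simp: p_in)

lemma Alg_cstar: "unital_cstar_subalg Alg"
  unfolding unital_cstar_subalg_def
proof (intro conjI ballI allI impI)
  show "bounded_seq f" if "f \<in> Alg" for f using that Alg_bounded by (auto simp: Alg_iff)
  show "(\<lambda>_. 1) \<in> Alg" unfolding Alg_iff by (intro exI[of _ "\<lambda>_. 1"]) auto
  show "(\<lambda>n. f n + g n) \<in> Alg" if fa: "f \<in> Alg" "g \<in> Alg" for f g
  proof -
    obtain a b where "continuous_on K a" "f = a \<circ> p" "continuous_on K b" "g = b \<circ> p"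
      using fa unfolding Alg_iff by blast
    then show ?thesis unfolding Alg_iff by (intro exI[of _ "\<lambda>x. a x + b x"]) (auto intro: continuous_intros)
  qed
  show "(\<lambda>n. f n * g n) \<in> Alg" if fa: "f \<in> Alg" "g \<in> Alg" for f g
  proof -
    obtain a b where "continuous_on K a" "f = a \<circ> p" "continuous_on K b" "g = b \<circ> p"
      using fa unfolding Alg_iff by blast
    then show ?thesis unfolding Alg_iff by (intro exI[of _ "\<lambda>x. a x * b x"]) (auto intro: continuous_intros)
  qed
  show "(\<lambda>n. c * f n) \<in> Alg" if fa: "f \<in> Alg" for f c
  proof -
    obtain a where "continuous_on K a" "f = a \<circ> p"
      using fa unfolding Alg_iff by blast
    then show ?thesis unfolding Alg_iff by (intro exI[of _ "\<lambda>x. c * a x"]) (auto intro: continuous_intros)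
  qed
  show "(\<lambda>n. cnj (f n)) \<in> Alg" if fa: "f \<in> Alg" for f
  proof -
    obtain a where "continuous_on K a" "f = a \<circ> p"
      using fa unfolding Alg_iff by blast
    then show ?thesis unfolding Alg_iff by (intro exI[of _ "\<lambda>x. cnj (a x)"]) (auto intro: continuous_intros)
  qed
  fix gs h
  assume A: "(\<forall>k. gs k \<in> Alg) \<and> uniform_limit UNIV gs h sequentially"
  then have ul: "uniform_limit UNIV gs h sequentially" by blast
  have "\<forall>k. \<exists>g. continuous_on K g \<and> gs k = g \<circ> p" using A by (auto simp: Alg_iff)
  from choice[OF this] obtain G where G0: "\<forall>k. continuous_on K (G k) \<and> gs k = G k \<circ> p" by blast
  then have G: "\<And>k. continuous_on K (G k)" "\<And>k. gs k = G k \<circ> p" by auto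
  have UC: "uniformly_Cauchy_on K G"
  proof (rule uniformly_Cauchy_onI)
    fix e :: real assume e: "e > 0"
    then have e3: "e/3 > 0" by simp
    obtain M where M0: "\<forall>m\<ge>M. \<forall>x\<in>UNIV. dist (gs m x) (h x) < e/3"
      using ul e3 unfolding uniform_limit_sequentially_iff by blast
    then have M: "\<And>m x. m \<ge> M \<Longrightarrow> dist (gs m x) (h x) < e/3" by blast
    show "\<exists>M. \<forall>x\<in>K. \<forall>m\<ge>M. \<forall>n\<ge>M. dist (G m x) (G n x) < e"
    proof (intro exI[of _ M] ballI allI impI)
      fix x m n assume x: "x \<in> K" and mn: "m \<ge> M" "n \<ge> M"
      have "dist (G m x) (G n x) \<le> 2*e/3"
      proof (rule dense_le[where d="\<lambda>x. dist (G m x) (G n x)"])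
        show "continuous_on K (\<lambda>x. dist (G m x) (G n x))" using G by (intro continuous_on_dist) auto
        fix j
        have "dist (gs m j) (gs n j) \<le> dist (gs m j) (h j) + dist (gs n j) (h j)"
          by (rule dist_triangle2)
        also have "\<dots> \<le> 2*e/3" using M[OF mn(1), of j] M[OF mn(2), of j] by simp
        finally show "dist (G m (p j)) (G n (p j)) \<le> 2*e/3" using G(2) by (simp add: comp_def)
      qed fact
      then show "dist (G m x) (G n x) < e" using e by simp
    qed
  qed
  then obtain l where l: "uniform_limit K G l sequentially"
    using Cauchy_uniformly_convergent uniformly_convergent_on_def by blast
  have cl: "continuous_on K l"
    by (rule uniform_limit_theorem[OF _ l]) (auto simp: G)
  have "h = l \<circ> p"
  proof
    fix n
    have "(\<lambda>k. G k (p n)) \<longlonglongrightarrow> l (p n)" using tendsto_uniform_limitI[OF l p_in] .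
    moreover have "(\<lambda>k. gs k n) \<longlonglongrightarrow> h n" using tendsto_uniform_limitI[OF ul] by simp
    ultimately show "h n = (l \<circ> p) n" using G(2) by (simp add: LIMSEQ_unique comp_def)
  qed
  then show "h \<in> Alg" using cl by (auto simp: Alg_iff)
qed

lemma Alg_min:
  fixes Gs :: "('a \<Rightarrow> complex) set"
  assumes S: "unital_cstar_subalg S"
    and Gs: "\<And>g. g \<in> Gs \<Longrightarrow> continuous_on K g \<and> g \<circ> p \<in> S"
    and sep: "\<And>x y. x \<in> K \<Longrightarrow> y \<in> K \<Longrightarrow> x \<noteq> y \<Longrightarrow> \<exists>g\<in>Gs. g x \<noteq> g y"
  shows "Alg \<subseteq> S"
proof -
  define R where "R = {r :: 'a \<Rightarrow> real. continuous_on K r \<and> (\<lambda>n. complex_of_real (r (p n))) \<in> S}"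
  have ReS: "(\<lambda>x. Re (g x)) \<in> R" if "g \<in> Gs" for g
  proof -
    have "(\<lambda>n. (1/2) * (g (p n) + cnj (g (p n)))) \<in> S"
      using Gs[OF that] S by (intro ucs_smult ucs_add ucs_cnj) (auto simp: comp_def)
    moreover have "(\<lambda>n. (1/2) * (g (p n) + cnj (g (p n)))) = (\<lambda>n. complex_of_real (Re (g (p n))))"
      by (rule ext) (simp add: complex_eq_iff)
    ultimately show ?thesis unfolding R_def using Gs[OF that] by (auto intro: continuous_intros)
  qed
  have ImS: "(\<lambda>x. Im (g x)) \<in> R" if "g \<in> Gs" for g
  proof -
    have "(\<lambda>n. (-\<i>/2) * (g (p n) + (-1) * cnj (g (p n)))) \<in> S"
      using Gs[OF that] S by (intro ucs_smult ucs_add ucs_cnj) (auto simp: comp_def)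
    moreover have "(\<lambda>n. (-\<i>/2) * (g (p n) + (-1) * cnj (g (p n)))) = (\<lambda>n. complex_of_real (Im (g (p n))))"
      by (rule ext) (simp add: complex_eq_iff)
    ultimately show ?thesis unfolding R_def using Gs[OF that] by (auto intro: continuous_intros)
  qed
  have realS: "(\<lambda>n. complex_of_real (r (p n))) \<in> S" if r: "continuous_on K r" for r
  proof -
    have approx: "\<exists>g\<in>R. \<forall>x\<in>K. \<bar>r x - g x\<bar> < e" if "e > 0" for e
    proof (rule SW_hs[OF K_compact _ _ _ _ _ r that])
      show "continuous_on K f" if "f \<in> R" for f using that by (simp add: R_def)
      show "(\<lambda>x. f x + g x) \<in> R" if "f \<in> R" "g \<in> R" for f g
        using that S ucs_add[of S "\<lambda>n. complex_of_real (f (p n))" "\<lambda>n. complex_of_real (g (p n))"]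
        by (auto simp: R_def intro: continuous_intros)
      show "(\<lambda>x. f x * g x) \<in> R" if "f \<in> R" "g \<in> R" for f g
        using that S ucs_mult[of S "\<lambda>n. complex_of_real (f (p n))" "\<lambda>n. complex_of_real (g (p n))"]
        by (auto simp: R_def intro: continuous_intros)
      show "(\<lambda>_. c) \<in> R" for c
        using ucs_const[OF S, of "complex_of_real c"] by (auto simp: R_def)
      show "\<exists>f\<in>R. f x \<noteq> f y" if xy: "x \<in> K" "y \<in> K" "x \<noteq> y" for x y
      proof -
        obtain g where g: "g \<in> Gs" "g x \<noteq> g y" using sep[OF xy] by blast
        show ?thesis
        proof (cases "Re (g x) = Re (g y)")
          case False
          then show ?thesis using ReS[OF g(1)] by (intro bexI[of _ "\<lambda>x. Re (g x)"]) auto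
        next
          case True
          then have "Im (g x) \<noteq> Im (g y)" using g(2) complex_eqI by metis
          then show ?thesis using ImS[OF g(1)] by (intro bexI[of _ "\<lambda>x. Im (g x)"]) auto
        qed
      qed
    qed
    have "\<forall>k. \<exists>g. g \<in> R \<and> (\<forall>x\<in>K. \<bar>r x - g x\<bar> < inverse (real (Suc k)))"
      using approx by (simp add: Bex_def)
    from choice[OF this] obtain F where F0: "\<forall>k. F k \<in> R \<and> (\<forall>x\<in>K. \<bar>r x - F k x\<bar> < inverse (real (Suc k)))"
      by blast
    then have F: "\<And>k. F k \<in> R" "\<And>k x. x \<in> K \<Longrightarrow> \<bar>r x - F k x\<bar> < inverse (real (Suc k))"
      by auto
    show ?thesis
    proof (rule ucs_lim[OF S])
      show "(\<lambda>n. complex_of_real (F k (p n))) \<in> S" for k using F(1)[of k] by (simp add: R_def)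
      show "uniform_limit UNIV (\<lambda>k n. complex_of_real (F k (p n))) (\<lambda>n. complex_of_real (r (p n))) sequentially"
        unfolding uniform_limit_sequentially_iff
      proof (intro allI impI)
        fix e :: real assume "e > 0"
        then obtain N where N: "N \<noteq> 0" "inverse (real N) < e" using real_arch_inverse by blast
        show "\<exists>N. \<forall>n\<ge>N. \<forall>x\<in>UNIV. dist (complex_of_real (F n (p x))) (complex_of_real (r (p x))) < e"
        proof (intro exI[of _ N] allI impI ballI)
          fix n x assume "n \<ge> N"
          have "\<bar>r (p x) - F n (p x)\<bar> < inverse (real (Suc n))" using F(2) p_in by blast
          also have "\<dots> \<le> inverse (real N)" using \<open>n \<ge> N\<close> N(1) by (simp add: le_imp_inverse_le)
          also have "\<dots> < e" by (rule N(2))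
          moreover have "dist (complex_of_real (F n (p x))) (complex_of_real (r (p x))) = \<bar>r (p x) - F n (p x)\<bar>"
            by (simp add: dist_norm abs_minus_commute flip: of_real_diff)
          ultimately show "dist (complex_of_real (F n (p x))) (complex_of_real (r (p x))) < e"
            by simp
        qed
      qed
    qed
  qed
  show ?thesis
  proof
    fix f assume "f \<in> Alg"
    then obtain g where g: "continuous_on K g" "f = g \<circ> p" by (auto simp: Alg_iff)
    have "(\<lambda>n. complex_of_real (Re (g (p n)))) \<in> S" "(\<lambda>n. complex_of_real (Im (g (p n)))) \<in> S"
      using g by (auto intro!: realS continuous_intros)
    then have "(\<lambda>n. complex_of_real (Re (g (p n))) + \<i> * complex_of_real (Im (g (p n)))) \<in> S"
      using S by (intro ucs_add ucs_smult)
    moreover have "(\<lambda>n. complex_of_real (Re (g (p n))) + \<i> * complex_of_real (Im (g (p n)))) = f"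
      using g by (auto simp: complex_eq_iff)
    ultimately show "f \<in> S" by simp
  qed
qed

end


lemma iter_conj:
  assumes S: "\<And>x. x \<in> topspace X \<Longrightarrow> S x \<in> topspace X"
    and conj: "\<And>x. x \<in> topspace X \<Longrightarrow> \<phi> (S x) = T (\<phi> x)"
    and x: "x \<in> topspace X"
  shows "(S ^^ i) x \<in> topspace X \<and> \<phi> ((S ^^ i) x) = (T ^^ i) (\<phi> x)"
proof (induction i)
  case 0 then show ?case using x by simp
next
  case (Suc i) then show ?case using S conj by simp
qed

lemma entropy_conj_le:
  assumes hom: "homeomorphic_map X Y \<phi>"
    and S: "\<And>x. x \<in> topspace X \<Longrightarrow> S x \<in> topspace X"
    and conj: "\<And>x. x \<in> topspace X \<Longrightarrow> \<phi> (S x) = T (\<phi> x)"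
  shows "topological_entropy Y T \<le> topological_entropy X S"
proof -
  define P where "P W = topspace X \<inter> \<phi> -` W" for W
  have cont: "continuous_map X Y \<phi>" using hom by (rule homeomorphic_imp_continuous_map)
  have surj: "\<phi> ` topspace X = topspace Y" using hom by (rule homeomorphic_imp_surjective_map)
  have inj: "inj_on \<phi> (topspace X)" using hom by (rule homeomorphic_imp_injective_map)
  have Pinj: "A = B" if "A \<subseteq> topspace Y" "B \<subseteq> topspace Y" "P A = P B" for A B
  proof -
    have img: "C = \<phi> ` P C" if "C \<subseteq> topspace Y" for C
    proof
      show "\<phi> ` P C \<subseteq> C" unfolding P_def by auto
      show "C \<subseteq> \<phi> ` P C"
      proof
        fix y assume "y \<in> C"
        then have "y \<in> \<phi> ` topspace X" using that surj by auto
        then obtain x where "x \<in> topspace X" "y = \<phi> x" by auto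
        then show "y \<in> \<phi> ` P C" using \<open>y \<in> C\<close> unfolding P_def by auto
      qed
    qed
    have "A = \<phi> ` P A" using img that(1) by blast
    moreover have "B = \<phi> ` P B" using img that(2) by blast
    ultimately show ?thesis using that(3) by simp
  qed
  have PUn: "topspace X \<subseteq> \<Union> (P ` W) \<longleftrightarrow> topspace Y \<subseteq> \<Union> W" for W
  proof
    assume a: "topspace X \<subseteq> \<Union> (P ` W)"
    show "topspace Y \<subseteq> \<Union> W"
    proof
      fix y assume "y \<in> topspace Y"
      then obtain x where "x \<in> topspace X" "y = \<phi> x" using surj by auto
      then show "y \<in> \<Union> W" using a unfolding P_def by auto
    qed
  next
    assume a: "topspace Y \<subseteq> \<Union> W"
    show "topspace X \<subseteq> \<Union> (P ` W)"
    proof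
      fix x assume x: "x \<in> topspace X"
      then have "\<phi> x \<in> topspace Y" using surj by auto
      then show "x \<in> \<Union> (P ` W)" using a x unfolding P_def by auto
    qed
  qed
  have main: "cover_entropy X S (P ` U) = cover_entropy Y T U" for U
  proof -
    have join: "join_iter X S (P ` U) n = P ` join_iter Y T U n" for n
    proof -
      have eq: "topspace X \<inter> (\<Inter>i<n. (S ^^ i) -` P (V i)) = P (topspace Y \<inter> (\<Inter>i<n. (T ^^ i) -` V i))" for V
      proof (intro set_eqI iffI)
        fix x assume a: "x \<in> topspace X \<inter> (\<Inter>i<n. (S ^^ i) -` P (V i))"
        then have x: "x \<in> topspace X" by blast
        have "(T ^^ i) (\<phi> x) \<in> V i" if "i < n" for i
        proof -
          have "(S ^^ i) x \<in> P (V i)" using a that by blast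
          then have "\<phi> ((S ^^ i) x) \<in> V i" unfolding P_def by blast
          then show ?thesis using iter_conj[of X S \<phi> T, OF S conj x, of i] by simp
        qed
        moreover have "\<phi> x \<in> topspace Y" using x surj by blast
        ultimately show "x \<in> P (topspace Y \<inter> (\<Inter>i<n. (T ^^ i) -` V i))"
          using x unfolding P_def by blast
      next
        fix x assume a: "x \<in> P (topspace Y \<inter> (\<Inter>i<n. (T ^^ i) -` V i))"
        then have x: "x \<in> topspace X" unfolding P_def by blast
        have "(S ^^ i) x \<in> P (V i)" if "i < n" for i
        proof -
          have "(T ^^ i) (\<phi> x) \<in> V i" using a that unfolding P_def by blast
          then show ?thesis using iter_conj[of X S \<phi> T, OF S conj x, of i] unfolding P_def by simp
        qed
        then show "x \<in> topspace X \<inter> (\<Inter>i<n. (S ^^ i) -` P (V i))" using x by blast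
      qed
      show ?thesis
      proof (intro set_eqI iffI)
        fix W assume "W \<in> join_iter X S (P ` U) n"
        then obtain V where V: "W = topspace X \<inter> (\<Inter>i<n. (S ^^ i) -` V i)" "\<forall>i<n. V i \<in> P ` U"
          unfolding join_iter_def by blast
        then have "\<forall>i. \<exists>V'. i < n \<longrightarrow> V' \<in> U \<and> V i = P V'" by blast
        from choice[OF this] obtain V' where V': "\<forall>i. i < n \<longrightarrow> V' i \<in> U \<and> V i = P (V' i)"
          by blast
        have "(\<Inter>i<n. (S ^^ i) -` V i) = (\<Inter>i<n. (S ^^ i) -` P (V' i))"
          using V' by (intro INF_cong refl) auto
        then have "W = topspace X \<inter> (\<Inter>i<n. (S ^^ i) -` P (V' i))" using V(1) by simp
        also have "\<dots> = P (topspace Y \<inter> (\<Inter>i<n. (T ^^ i) -` V' i))" by (rule eq)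
        finally have WP: "W = P (topspace Y \<inter> (\<Inter>i<n. (T ^^ i) -` V' i))" .
        have "topspace Y \<inter> (\<Inter>i<n. (T ^^ i) -` V' i) \<in> join_iter Y T U n"
          unfolding join_iter_def mem_Collect_eq using V' by (intro exI[of _ V'] conjI) auto
        then show "W \<in> P ` join_iter Y T U n" unfolding WP by (rule imageI)
      next
        fix W assume "W \<in> P ` join_iter Y T U n"
        then obtain V' where V': "W = P (topspace Y \<inter> (\<Inter>i<n. (T ^^ i) -` V' i))" "\<forall>i<n. V' i \<in> U"
          unfolding join_iter_def by blast
        have "W = topspace X \<inter> (\<Inter>i<n. (S ^^ i) -` P (V' i))" using V'(1) eq[of V'] by (simp only:)
        then show "W \<in> join_iter X S (P ` U) n"
          unfolding join_iter_def mem_Collect_eq using V'(2)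
          by (intro exI[of _ "\<lambda>i. P (V' i)"] conjI) auto
      qed
    qed
    have cn: "cover_number X (join_iter X S (P ` U) n) = cover_number Y (join_iter Y T U n)" for n
    proof -
      let ?J = "join_iter Y T U n"
      have Jsub: "A \<subseteq> topspace Y" if "A \<in> ?J" for A using that unfolding join_iter_def by blast
      have injP: "inj_on P W" if "W \<subseteq> ?J" for W
        using that Jsub Pinj by (meson inj_onI subsetD)
      have "{card W |W. W \<subseteq> P ` ?J \<and> finite W \<and> topspace X \<subseteq> \<Union> W}
          = {card W |W. W \<subseteq> ?J \<and> finite W \<and> topspace Y \<subseteq> \<Union> W}"
      proof (intro set_eqI iffI)
        fix c assume "c \<in> {card W |W. W \<subseteq> P ` ?J \<and> finite W \<and> topspace X \<subseteq> \<Union> W}"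
        then obtain W where W: "c = card W" "W \<subseteq> P ` ?J" "finite W" "topspace X \<subseteq> \<Union> W" by blast
        then obtain W' where W': "W' \<subseteq> ?J" "W = P ` W'" by (auto simp: subset_image_iff)
        have "finite W'" using W(3) W' injP finite_image_iff by metis
        moreover have "card W = card W'" using W' injP card_image by metis
        moreover have "topspace Y \<subseteq> \<Union> W'" using W(4) W' PUn by simp
        ultimately show "c \<in> {card W |W. W \<subseteq> ?J \<and> finite W \<and> topspace Y \<subseteq> \<Union> W}"
          using W(1) W'(1) by blast
      next
        fix c assume "c \<in> {card W |W. W \<subseteq> ?J \<and> finite W \<and> topspace Y \<subseteq> \<Union> W}"
        then obtain W where W: "c = card W" "W \<subseteq> ?J" "finite W" "topspace Y \<subseteq> \<Union> W" by blast
        have "card (P ` W) = card W" using W(2) injP card_image by metis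
        moreover have "topspace X \<subseteq> \<Union> (P ` W)" using W(4) PUn by simp
        moreover have "P ` W \<subseteq> P ` ?J" using W(2) by blast
        ultimately show "c \<in> {card W |W. W \<subseteq> P ` ?J \<and> finite W \<and> topspace X \<subseteq> \<Union> W}"
          using W(1,3) by (metis (mono_tags, lifting) finite_imageI mem_Collect_eq)
      qed
      then show ?thesis unfolding cover_number_def join by simp
    qed
    show ?thesis unfolding cover_entropy_def cn ..
  qed
  show ?thesis
    unfolding topological_entropy_def
  proof (rule SUP_least)
    fix U assume U: "U \<in> {U. (\<forall>V\<in>U. openin Y V) \<and> topspace Y \<subseteq> \<Union> U}"
    have "P ` U \<in> {U. (\<forall>V\<in>U. openin X V) \<and> topspace X \<subseteq> \<Union> U}"
    proof -
      have "openin X (P V)" if "V \<in> U" for V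
      proof -
        have "P V = {x \<in> topspace X. \<phi> x \<in> V}" unfolding P_def by auto
        then show ?thesis using openin_continuous_map_preimage[OF cont] U that by simp
      qed
      then show ?thesis using U PUn by auto
    qed
    then have "ereal (cover_entropy X S (P ` U)) \<le> (SUP U \<in> {U. (\<forall>V\<in>U. openin X V) \<and> topspace X \<subseteq> \<Union> U}. ereal (cover_entropy X S U))"
      by (rule SUP_upper)
    then show "ereal (cover_entropy Y T U) \<le> (SUP U \<in> {U. (\<forall>V\<in>U. openin X V) \<and> topspace X \<subseteq> \<Union> U}. ereal (cover_entropy X S U))"
      using main by simp
  qed
qed


lemma PiE_UNIV_compact_closed:
  fixes S :: "'i \<Rightarrow> 'b::topological_space set"
  assumes c: "\<And>i. compact (S i)" and cl: "\<And>i. closed (S i)"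
  shows "compact (PiE UNIV S)" "closed (PiE UNIV S)"
proof -
  have "compactin (product_topology (\<lambda>_. euclidean) UNIV) (PiE UNIV S)"
    by (rule compactin_PiE[THEN iffD2], rule disjI2, intro ballI) (simp only: compactin_euclidean_iff c)
  then have "compactin euclidean (PiE UNIV S)" by (simp only: euclidean_product_topology)
  then show "compact (PiE UNIV S)" by (simp only: compactin_euclidean_iff)
  have "closedin (product_topology (\<lambda>_. euclidean) UNIV) (PiE UNIV S)"
    by (rule closedin_product_topology[THEN iffD2], rule disjI2, intro ballI) (simp only: closed_closedin[symmetric] cl)
  then have "closedin euclidean (PiE UNIV S)" by (simp only: euclidean_product_topology)
  then show "closed (PiE UNIV S)" by (simp only: closed_closedin)
qed

locale setting =
  fixes f :: "'l \<Rightarrow> nat \<Rightarrow> complex" and \<Lambda> :: "'l set"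
    and z :: "nat \<Rightarrow> ('l \<Rightarrow> complex)"
    and \<kappa> :: "nat \<Rightarrow> (nat \<Rightarrow> ('l \<Rightarrow> complex))"
    and X0 :: "('l \<Rightarrow> complex) set" and Y :: "(nat \<Rightarrow> ('l \<Rightarrow> complex)) set"
    and B :: "(nat \<Rightarrow> ('l \<Rightarrow> complex)) \<Rightarrow> (nat \<Rightarrow> ('l \<Rightarrow> complex))"
  assumes bdd: "\<And>l. l \<in> \<Lambda> \<Longrightarrow> bounded_seq (f l)"
    and z_def: "\<And>n. z n = restrict (\<lambda>l. f l n) \<Lambda>"
    and X0_def: "X0 = closure (range z)"
    and \<kappa>_def: "\<And>n. \<kappa> n = (\<lambda>k. z (n + k))"
    and Y_def: "Y = closure (range \<kappa>)"
    and B_def: "\<And>\<omega>. B \<omega> = (\<lambda>k. \<omega> (Suc k))"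
begin

definition Mb :: "'l \<Rightarrow> real" where
  "Mb l = (SOME M. \<forall>n. norm (f l n) \<le> M)"

lemma Mb: "l \<in> \<Lambda> \<Longrightarrow> norm (f l n) \<le> Mb l"
proof -
  assume "l \<in> \<Lambda>"
  then have "\<exists>M. \<forall>n. norm (f l n) \<le> M"
    using bdd[of l] unfolding bounded_seq_def bounded_iff by simp
  then have "\<forall>n. norm (f l n) \<le> Mb l" unfolding Mb_def by (rule someI_ex)
  then show ?thesis by blast
qed

definition Cs :: "'l \<Rightarrow> complex set" where
  "Cs l = (if l \<in> \<Lambda> then cball 0 (Mb l) else {undefined})"

definition C :: "('l \<Rightarrow> complex) set" where "C = PiE UNIV Cs"

lemma Cs_cc: "compact (Cs l) \<and> closed (Cs l)"
proof (cases "l \<in> \<Lambda>")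
  case True
  then show ?thesis unfolding Cs_def by simp
next
  case False
  then show ?thesis unfolding Cs_def by simp
qed

lemma C: "compact C" "closed C"
  unfolding C_def using Cs_cc PiE_UNIV_compact_closed[of Cs] by blast+

lemma z_l: "l \<in> \<Lambda> \<Longrightarrow> z n l = f l n"
  by (simp add: z_def)

lemma z_nl: "l \<notin> \<Lambda> \<Longrightarrow> z n l = undefined"
  by (simp add: z_def)

lemma z_C: "z n \<in> C"
  unfolding C_def PiE_iff
proof (intro conjI ballI)
  fix i :: 'l
  show "z n i \<in> Cs i"
  proof (cases "i \<in> \<Lambda>")
    case True
    then show ?thesis using Mb[OF True, of n] by (simp add: Cs_def z_l)
  next
    case False
    then show ?thesis by (simp add: Cs_def z_nl)
  qed
qed simp

lemma X0C: "X0 \<subseteq> C"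
  unfolding X0_def by (rule closure_minimal) (use z_C C in auto)

lemma X0_compact: "compact X0"
proof -
  have "compact (X0 \<inter> C)" by (rule closed_Int_compact[OF _ C(1)]) (simp add: X0_def)
  moreover have "X0 \<inter> C = X0" using X0C by blast
  ultimately show ?thesis by simp
qed

lemma C_nl: assumes "x \<in> C" "l \<notin> \<Lambda>" shows "x l = undefined"
proof -
  have "x l \<in> Cs l" using assms(1) unfolding C_def PiE_iff by blast
  then show ?thesis using assms(2) by (simp add: Cs_def)
qed

sublocale A1: seqsp z X0
  by (rule seqsp.intro) (rule X0_def, rule X0_compact)

lemma coord_cont: "continuous_on S (\<lambda>x::'i \<Rightarrow> 'b::topological_space. x i)"
  by (rule continuous_on_subset[OF continuous_on_product_coordinates]) simp

lemma coord2_cont: "continuous_on S (\<lambda>x::'i \<Rightarrow> 'j \<Rightarrow> 'b::topological_space. x i j)"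
proof -
  have "continuous_on UNIV ((\<lambda>y::'j \<Rightarrow> 'b. y j) \<circ> (\<lambda>x::'i \<Rightarrow> 'j \<Rightarrow> 'b. x i))"
    by (rule continuous_on_compose) (simp_all add: coord_cont)
  then have "continuous_on UNIV (\<lambda>x::'i \<Rightarrow> 'j \<Rightarrow> 'b. x i j)" by (simp add: comp_def)
  then show ?thesis by (rule continuous_on_subset) simp
qed

lemma f_comp_z: "l \<in> \<Lambda> \<Longrightarrow> (\<lambda>x. x l) \<circ> z = f l"
  by (rule ext) (simp add: z_l)

lemma part1: "(\<lambda>g. g \<circ> z) ` {g. continuous_on X0 g} = cstar_gen (f ` \<Lambda>)"
proof -
  let ?Gs = "(\<lambda>l x. x l) ` \<Lambda>"
  have sep: "\<exists>g\<in>?Gs. g x \<noteq> g y" if xy: "x \<in> X0" "y \<in> X0" "x \<noteq> y" for x y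
  proof -
    obtain l where l: "x l \<noteq> y l" using xy(3) by (auto simp: fun_eq_iff)
    have "l \<in> \<Lambda>"
    proof (rule ccontr)
      assume "l \<notin> \<Lambda>"
      then have "x l = undefined" "y l = undefined" using C_nl xy X0C by blast+
      then show False using l by simp
    qed
    then show ?thesis using l by (intro bexI[of _ "\<lambda>x. x l"]) auto
  qed
  have "A1.Alg \<subseteq> cstar_gen (f ` \<Lambda>)"
    unfolding cstar_gen_def
  proof (rule Inter_greatest)
    fix S assume S: "S \<in> {S. unital_cstar_subalg S \<and> f ` \<Lambda> \<subseteq> S}"
    show "A1.Alg \<subseteq> S"
    proof (rule A1.Alg_min[of S ?Gs])
      show "unital_cstar_subalg S" using S by blast
      show "continuous_on X0 g \<and> g \<circ> z \<in> S" if g: "g \<in> ?Gs" for g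
      proof -
        obtain l where l: "l \<in> \<Lambda>" "g = (\<lambda>x. x l)" using g by blast
        have "g \<circ> z = f l" using f_comp_z[OF l(1)] l(2) by simp
        moreover have "f l \<in> S" using S l(1) by blast
        ultimately show ?thesis using coord_cont l(2) by simp
      qed
    qed (rule sep)
  qed
  moreover have "cstar_gen (f ` \<Lambda>) \<subseteq> A1.Alg"
    unfolding cstar_gen_def
  proof (rule Inter_lower)
    have "f ` \<Lambda> \<subseteq> A1.Alg"
    proof
      fix a assume "a \<in> f ` \<Lambda>"
      then obtain l where "l \<in> \<Lambda>" "a = f l" by blast
      then show "a \<in> A1.Alg" unfolding A1.Alg_iff using f_comp_z[of l] coord_cont
        by (intro exI[of _ "\<lambda>x. x l"]) simp
    qed
    then show "A1.Alg \<in> {S. unital_cstar_subalg S \<and> f ` \<Lambda> \<subseteq> S}"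
      using A1.Alg_cstar by blast
  qed
  ultimately have "A1.Alg = cstar_gen (f ` \<Lambda>)" by (rule subset_antisym)
  then show ?thesis unfolding A1.Alg_def .
qed

lemma part1u: fixes g h :: "('l \<Rightarrow> complex) \<Rightarrow> complex" shows "continuous_on X0 g \<and> continuous_on X0 h \<and> g \<circ> z = h \<circ> z \<longrightarrow> (\<forall>x\<in>X0. g x = h x)"
  using A1.uniq[of g h] by blast

end


context setting begin

definition D :: "(nat \<Rightarrow> 'l \<Rightarrow> complex) set" where "D = PiE UNIV (\<lambda>_::nat. C)"

lemma D: "compact D" "closed D"
  unfolding D_def using C PiE_UNIV_compact_closed[of "\<lambda>_::nat. C"] by blast+

lemma \<kappa>_D: "\<kappa> n \<in> D"
  unfolding D_def PiE_iff by (simp add: \<kappa>_def z_C)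

lemma YD: "Y \<subseteq> D"
  unfolding Y_def by (rule closure_minimal) (use \<kappa>_D D in auto)

lemma Y_compact: "compact Y"
proof -
  have "compact (Y \<inter> D)" by (rule closed_Int_compact[OF _ D(1)]) (simp add: Y_def)
  moreover have "Y \<inter> D = Y" using YD by blast
  ultimately show ?thesis by simp
qed

sublocale A2: seqsp \<kappa> Y
  by (rule seqsp.intro) (rule Y_def, rule Y_compact)

lemma B_eq: "B = (\<lambda>\<omega> k. \<omega> (Suc k))"
  by (rule ext) (simp add: B_def)

lemma B_cont: "continuous_on S B"
proof -
  have "continuous_on UNIV B" unfolding B_eq
    by (rule continuous_on_coordinatewise_then_product) simp
  then show ?thesis by (rule continuous_on_subset) simp
qed

lemma B_\<kappa>: "B (\<kappa> n) = \<kappa> (Suc n)"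
  by (simp add: B_def \<kappa>_def)

lemma BY: "x \<in> Y \<Longrightarrow> B x \<in> Y"
proof -
  assume x: "x \<in> Y"
  have "B ` closure (range \<kappa>) \<subseteq> Y"
  proof (rule image_closure_subset)
    show "continuous_on (closure (range \<kappa>)) B" by (rule B_cont)
    show "closed Y" by (simp add: Y_def)
    show "B ` range \<kappa> \<subseteq> Y" using A2.p_in by (auto simp: B_\<kappa>)
  qed
  then show ?thesis using x Y_def by blast
qed

lemma cont_B: "continuous_on Y h \<Longrightarrow> continuous_on Y (h \<circ> B)"
proof -
  assume h: "continuous_on Y h"
  have "B ` Y \<subseteq> Y" using BY by blast
  then show ?thesis by (intro continuous_on_compose B_cont continuous_on_subset[OF h])
qed

lemma shift_comp: "shiftA (h \<circ> \<kappa>) = (h \<circ> B) \<circ> \<kappa>"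
  by (rule ext) (simp add: shiftA_def B_\<kappa>)

lemma shift_Alg: "a \<in> A2.Alg \<Longrightarrow> shiftA a \<in> A2.Alg"
proof -
  assume "a \<in> A2.Alg"
  then obtain h where h: "continuous_on Y h" "a = h \<circ> \<kappa>" unfolding A2.Alg_iff by blast
  show ?thesis unfolding A2.Alg_iff
    by (intro exI[of _ "h \<circ> B"] conjI cont_B h(1)) (simp add: h(2) shift_comp)
qed

lemma f_shift:
  assumes S: "shift_invariant S" and fl: "f l \<in> S"
  shows "(\<lambda>n. f l (n + k)) \<in> S"
proof (induction k)
  case 0 then show ?case using fl by simp
next
  case (Suc k)
  then have "shiftA (\<lambda>n. f l (n + k)) \<in> S" using S unfolding shift_invariant_def by blast
  moreover have "shiftA (\<lambda>n. f l (n + k)) = (\<lambda>n. f l (n + Suc k))" by (simp add: shiftA_def)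
  ultimately show ?case by simp
qed

lemma coordk: "l \<in> \<Lambda> \<Longrightarrow> (\<lambda>y. y k l) \<circ> \<kappa> = (\<lambda>n. f l (n + k))"
  by (rule ext) (simp add: \<kappa>_def z_l)

lemma part2: "(\<lambda>h. h \<circ> \<kappa>) ` {h. continuous_on Y h} = anqie_gen (f ` \<Lambda>)"
proof -
  define Gs where "Gs = {g. \<exists>k. \<exists>l\<in>\<Lambda>. g = (\<lambda>y::nat \<Rightarrow> 'l \<Rightarrow> complex. y k l)}"
  have sep: "\<exists>g\<in>Gs. g x \<noteq> g y" if xy: "x \<in> Y" "y \<in> Y" "x \<noteq> y" for x y
  proof -
    obtain k where k: "x k \<noteq> y k" using xy(3) by (auto simp: fun_eq_iff)
    then obtain l where l: "x k l \<noteq> y k l" by (auto simp: fun_eq_iff)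
    have xC: "x k \<in> C" "y k \<in> C" using xy YD unfolding D_def PiE_iff by blast+
    have "l \<in> \<Lambda>"
    proof (rule ccontr)
      assume "l \<notin> \<Lambda>"
      then have "x k l = undefined" "y k l = undefined" using C_nl xC by blast+
      then show False using l by simp
    qed
    then have "(\<lambda>y::nat \<Rightarrow> 'l \<Rightarrow> complex. y k l) \<in> Gs" unfolding Gs_def
      by (intro CollectI exI[of _ k] bexI[of _ l]) simp_all
    then show ?thesis using l by (intro bexI[of _ "\<lambda>y. y k l"]) auto
  qed
  have "A2.Alg \<subseteq> anqie_gen (f ` \<Lambda>)"
    unfolding anqie_gen_def
  proof (rule Inter_greatest)
    fix S assume S: "S \<in> {S. unital_cstar_subalg S \<and> shift_invariant S \<and> f ` \<Lambda> \<subseteq> S}"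
    show "A2.Alg \<subseteq> S"
    proof (rule A2.Alg_min[of S Gs])
      show "unital_cstar_subalg S" using S by blast
      show "continuous_on Y g \<and> g \<circ> \<kappa> \<in> S" if g: "g \<in> Gs" for g
      proof -
        obtain k l where l: "l \<in> \<Lambda>" "g = (\<lambda>y. y k l)" using g unfolding Gs_def by blast
        have "g \<circ> \<kappa> = (\<lambda>n. f l (n + k))" using coordk[OF l(1)] l(2) by simp
        moreover have "f l \<in> S" using S l(1) by blast
        then have "(\<lambda>n. f l (n + k)) \<in> S" using S f_shift by blast
        ultimately show ?thesis using coord2_cont l(2) by simp
      qed
    qed (rule sep)
  qed
  moreover have "anqie_gen (f ` \<Lambda>) \<subseteq> A2.Alg"
    unfolding anqie_gen_def
  proof (rule Inter_lower)
    have "f ` \<Lambda> \<subseteq> A2.Alg"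
    proof
      fix a assume "a \<in> f ` \<Lambda>"
      then obtain l where l: "l \<in> \<Lambda>" "a = f l" by blast
      have "(\<lambda>y. y 0 l) \<circ> \<kappa> = f l" using coordk[OF l(1), of 0] by simp
      then show "a \<in> A2.Alg" unfolding A2.Alg_iff using coord2_cont l(2)
        by (intro exI[of _ "\<lambda>y. y 0 l"]) simp
    qed
    moreover have "shift_invariant A2.Alg" unfolding shift_invariant_def using shift_Alg by blast
    ultimately show "A2.Alg \<in> {S. unital_cstar_subalg S \<and> shift_invariant S \<and> f ` \<Lambda> \<subseteq> S}"
      using A2.Alg_cstar by blast
  qed
  ultimately have "A2.Alg = anqie_gen (f ` \<Lambda>)" by (rule subset_antisym)
  then show ?thesis unfolding A2.Alg_def .
qed

lemma part2u: fixes g h :: "(nat \<Rightarrow> 'l \<Rightarrow> complex) \<Rightarrow> complex"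
  shows "continuous_on Y g \<and> continuous_on Y h \<and> g \<circ> \<kappa> = h \<circ> \<kappa> \<longrightarrow> (\<forall>y\<in>Y. g y = h y)"
  using A2.uniq[of g h] by blast

lemma anqie_eq: "anqie_gen (f ` \<Lambda>) = A2.Alg"
  using part2 unfolding A2.Alg_def by simp

end


context setting begin

definition rep :: "(nat \<Rightarrow> complex) \<Rightarrow> (nat \<Rightarrow> 'l \<Rightarrow> complex) \<Rightarrow> complex" where
  "rep a = (SOME h. continuous_on Y h \<and> a = h \<circ> \<kappa>)"

lemma rep: "a \<in> A2.Alg \<Longrightarrow> continuous_on Y (rep a) \<and> a = rep a \<circ> \<kappa>"
proof -
  assume "a \<in> A2.Alg"
  then have "\<exists>h. continuous_on Y h \<and> a = h \<circ> \<kappa>" by (simp add: A2.Alg_iff)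
  then show ?thesis unfolding rep_def by (rule someI_ex)
qed

lemma rep_app: "a \<in> A2.Alg \<Longrightarrow> a n = rep a (\<kappa> n)"
proof -
  assume "a \<in> A2.Alg"
  then have "a = rep a \<circ> \<kappa>" using rep by blast
  then have "a n = (rep a \<circ> \<kappa>) n" by (rule fun_cong)
  then show ?thesis by (simp only: o_apply)
qed

lemma rep_cont: "a \<in> A2.Alg \<Longrightarrow> continuous_on Y (rep a)"
  using rep by blast

definition E :: "(nat \<Rightarrow> 'l \<Rightarrow> complex) \<Rightarrow> ((nat \<Rightarrow> complex) \<Rightarrow> complex)" where
  "E y = restrict (\<lambda>a. rep a y) A2.Alg"

lemma E_rep: "a \<in> A2.Alg \<Longrightarrow> E y a = rep a y"
  by (simp add: E_def)

lemma in_Alg: "continuous_on Y h \<Longrightarrow> (\<lambda>n. h (\<kappa> n)) \<in> A2.Alg"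
  unfolding A2.Alg_iff by (intro exI[of _ h]) (simp add: comp_def)

lemma E_comp:
  assumes h: "continuous_on Y h" and y: "y \<in> Y"
  shows "E y (\<lambda>n. h (\<kappa> n)) = h y"
proof -
  let ?a = "\<lambda>n. h (\<kappa> n)"
  have a: "?a \<in> A2.Alg" using in_Alg[OF h] .
  have "rep ?a \<circ> \<kappa> = h \<circ> \<kappa>"
  proof
    fix n show "(rep ?a \<circ> \<kappa>) n = (h \<circ> \<kappa>) n" using rep_app[OF a, of n] by simp
  qed
  then have "rep ?a y = h y" using A2.uniq[OF rep_cont[OF a] h _ y] by blast
  then show ?thesis using E_rep[OF a] by simp
qed

lemma E_comp':
  assumes h: "continuous_on Y h" and y: "y \<in> Y" and a: "a = (\<lambda>n. h (\<kappa> n))"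
  shows "E y a = h y"
  using E_comp[OF h y] a by simp

lemma one_Alg: "(\<lambda>_. 1) \<in> A2.Alg"
  by (rule ucs_one[OF A2.Alg_cstar])

lemma E_char: "y \<in> Y \<Longrightarrow> E y \<in> characters A2.Alg"
proof -
  assume y: "y \<in> Y"
  have add: "E y (\<lambda>n. a n + b n) = E y a + E y b" if a: "a \<in> A2.Alg" and b: "b \<in> A2.Alg" for a b
  proof -
    have "(\<lambda>n. a n + b n) = (\<lambda>n. rep a (\<kappa> n) + rep b (\<kappa> n))"
      by (rule ext) (simp only: rep_app[OF a] rep_app[OF b])
    then have "E y (\<lambda>n. a n + b n) = rep a y + rep b y"
      by (intro E_comp'[OF _ y]) (intro continuous_intros rep_cont a b)
    then show ?thesis using E_rep a b by simp
  qed
  have mult: "E y (\<lambda>n. a n * b n) = E y a * E y b" if a: "a \<in> A2.Alg" and b: "b \<in> A2.Alg" for a b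
  proof -
    have "(\<lambda>n. a n * b n) = (\<lambda>n. rep a (\<kappa> n) * rep b (\<kappa> n))"
      by (rule ext) (simp only: rep_app[OF a] rep_app[OF b])
    then have "E y (\<lambda>n. a n * b n) = rep a y * rep b y"
      by (intro E_comp'[OF _ y]) (intro continuous_intros rep_cont a b)
    then show ?thesis using E_rep a b by simp
  qed
  have smult: "E y (\<lambda>n. c * a n) = c * E y a" if a: "a \<in> A2.Alg" for a c
  proof -
    have "(\<lambda>n. c * a n) = (\<lambda>n. c * rep a (\<kappa> n))"
      by (rule ext) (simp only: rep_app[OF a])
    then have "E y (\<lambda>n. c * a n) = c * rep a y"
      by (intro E_comp'[OF _ y]) (intro continuous_intros rep_cont a)
    then show ?thesis using E_rep a by simp
  qed
  have one: "E y (\<lambda>_. 1) = 1"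
    by (rule E_comp'[OF _ y]) (auto intro!: continuous_intros)
  have ext: "E y \<in> extensional A2.Alg" unfolding E_def by (rule restrict_extensional)
  show ?thesis unfolding characters_def using add mult smult one ext by blast
qed

lemma E_inj:
  assumes x: "x \<in> Y" and y: "y \<in> Y" and eq: "E x = E y"
  shows "x = y"
proof (rule ccontr)
  assume "x \<noteq> y"
  then obtain k where k: "x k \<noteq> y k" by (auto simp: fun_eq_iff)
  then obtain l where l: "x k l \<noteq> y k l" by (auto simp: fun_eq_iff)
  have "E x (\<lambda>n. \<kappa> n k l) = x k l" using E_comp[OF coord2_cont x] .
  moreover have "E y (\<lambda>n. \<kappa> n k l) = y k l" using E_comp[OF coord2_cont y] .
  ultimately show False using eq l by simp
qed

lemma E_surj:
  assumes \<rho>: "\<rho> \<in> characters A2.Alg"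
  shows "\<exists>y\<in>Y. E y = \<rho>"
proof (rule ccontr)
  assume nex: "\<not> (\<exists>y\<in>Y. E y = \<rho>)"
  have \<rho>ext: "\<rho> \<in> extensional A2.Alg" using \<rho> by (simp add: characters_def)
  have radd: "\<And>a b. a \<in> A2.Alg \<Longrightarrow> b \<in> A2.Alg \<Longrightarrow> \<rho> (\<lambda>n. a n + b n) = \<rho> a + \<rho> b"
    using \<rho> unfolding characters_def by blast
  have rmult: "\<And>a b. a \<in> A2.Alg \<Longrightarrow> b \<in> A2.Alg \<Longrightarrow> \<rho> (\<lambda>n. a n * b n) = \<rho> a * \<rho> b"
    using \<rho> unfolding characters_def by blast
  have rsmult: "\<And>c a. a \<in> A2.Alg \<Longrightarrow> \<rho> (\<lambda>n. c * a n) = c * \<rho> a"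
    using \<rho> unfolding characters_def by blast
  have rone: "\<rho> (\<lambda>_. 1) = 1"
    using \<rho> unfolding characters_def by blast
  have rconst: "\<rho> (\<lambda>_. c) = c" for c
    using rsmult[OF one_Alg, of c] rone by simp
  have constA: "(\<lambda>_. c) \<in> A2.Alg" for c by (rule ucs_const[OF A2.Alg_cstar])
  have Hex: "\<forall>y. \<exists>h. y \<in> Y \<longrightarrow> continuous_on Y h \<and> \<rho> (\<lambda>n. h (\<kappa> n)) \<noteq> h y"
  proof
    fix y
    show "\<exists>h. y \<in> Y \<longrightarrow> continuous_on Y h \<and> \<rho> (\<lambda>n. h (\<kappa> n)) \<noteq> h y"
    proof (cases "y \<in> Y")
      case False then show ?thesis by simp
    next
      case True
      then have ne: "E y \<noteq> \<rho>" using nex by blast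
      obtain a where a: "a \<in> A2.Alg" "E y a \<noteq> \<rho> a"
      proof (rule ccontr)
        assume "\<not> thesis"
        then have "\<forall>a\<in>A2.Alg. E y a = \<rho> a" using that by blast
        then have "E y = \<rho>"
          by (intro extensionalityI[OF _ \<rho>ext]) (auto simp: E_def)
        then show False using ne by simp
      qed
      have "(\<lambda>n. rep a (\<kappa> n)) = a" using rep_app[OF a(1)] by (simp add: fun_eq_iff)
      then have "\<rho> (\<lambda>n. rep a (\<kappa> n)) \<noteq> rep a y" using a E_rep by simp
      then show ?thesis using rep_cont[OF a(1)] by (intro exI[of _ "rep a"]) simp
    qed
  qed
  from choice[OF Hex] obtain H where H0: "\<forall>y. y \<in> Y \<longrightarrow> continuous_on Y (H y) \<and> \<rho> (\<lambda>n. H y (\<kappa> n)) \<noteq> H y y"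
    by blast
  define k where "k y x = H y x - \<rho> (\<lambda>n. H y (\<kappa> n))" for y x
  have kc: "continuous_on Y (k y)" if "y \<in> Y" for y
    unfolding k_def using H0 that by (auto intro!: continuous_intros)
  have ky: "k y y \<noteq> 0" if "y \<in> Y" for y
    unfolding k_def using H0 that by auto
  have kA: "(\<lambda>n. k y (\<kappa> n)) \<in> A2.Alg" if "y \<in> Y" for y
    by (rule in_Alg[OF kc[OF that]])
  have k\<rho>: "\<rho> (\<lambda>n. k y (\<kappa> n)) = 0" if y: "y \<in> Y" for y
  proof -
    let ?c = "- \<rho> (\<lambda>n. H y (\<kappa> n))"
    have HA: "(\<lambda>n. H y (\<kappa> n)) \<in> A2.Alg" using H0 y in_Alg by blast
    have "\<rho> (\<lambda>n. H y (\<kappa> n) + ?c) = \<rho> (\<lambda>n. H y (\<kappa> n)) + \<rho> (\<lambda>_. ?c)"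
      using radd[OF HA constA[of ?c]] by simp
    also have "\<dots> = 0" by (simp add: rconst)
    finally show ?thesis by (simp add: k_def)
  qed
  have Oex: "\<forall>y. \<exists>Op. y \<in> Y \<longrightarrow> open Op \<and> Op \<inter> Y = k y -` (- {0}) \<inter> Y"
  proof
    fix y show "\<exists>Op. y \<in> Y \<longrightarrow> open Op \<and> Op \<inter> Y = k y -` (- {0}) \<inter> Y"
    proof (cases "y \<in> Y")
      case True
      have "open (- {0::complex})" by (rule open_Compl) simp
      then show ?thesis using continuous_on_open_invariant[THEN iffD1, OF kc[OF True]] by blast
    qed simp
  qed
  from choice[OF Oex] obtain Oc where O0: "\<forall>y. y \<in> Y \<longrightarrow> open (Oc y) \<and> Oc y \<inter> Y = k y -` (- {0}) \<inter> Y"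
    by blast
  have cover: "Y \<subseteq> \<Union> (Oc ` Y)"
  proof
    fix y assume y: "y \<in> Y"
    then have "y \<in> k y -` (- {0}) \<inter> Y" using ky by simp
    then have "y \<in> Oc y" using O0 y by blast
    then show "y \<in> \<Union> (Oc ` Y)" using y by blast
  qed
  obtain F where F: "F \<subseteq> Y" "finite F" "Y \<subseteq> \<Union> (Oc ` F)"
    using compactE_image[OF Y_compact, of Y Oc] O0 cover by blast
  define g where "g x = (\<Sum>y\<in>F. k y x * cnj (k y x))" for x
  have gc: "continuous_on Y g"
    unfolding g_def
  proof (rule continuous_on_sum)
    fix y assume "y \<in> F"
    then have "continuous_on Y (k y)" using F(1) kc by blast
    then show "continuous_on Y (\<lambda>x. k y x * cnj (k y x))" by (intro continuous_intros)
  qed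
  have gnz: "g x \<noteq> 0" if x: "x \<in> Y" for x
  proof -
    obtain y where y: "y \<in> F" "x \<in> Oc y" using F(3) x by blast
    then have "x \<in> k y -` (- {0}) \<inter> Y" using O0 F(1) x by blast
    then have kyx: "k y x \<noteq> 0" by simp
    have "g x = complex_of_real (\<Sum>y\<in>F. (cmod (k y x))\<^sup>2)"
      unfolding g_def of_real_sum by (simp only: complex_norm_square)
    moreover have "(\<Sum>y\<in>F. (cmod (k y x))\<^sup>2) > 0"
      by (rule sum_pos2[OF F(2) y(1)]) (simp_all add: kyx)
    ultimately show ?thesis by (metis of_real_eq_0_iff order_less_irrefl)
  qed
  have sumL: "finite G \<Longrightarrow> (\<forall>y\<in>G. t y \<in> A2.Alg) \<Longrightarrow>
      (\<lambda>n. \<Sum>y\<in>G. t y n) \<in> A2.Alg \<and> \<rho> (\<lambda>n. \<Sum>y\<in>G. t y n) = (\<Sum>y\<in>G. \<rho> (t y))" for G t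
  proof (induction G rule: finite_induct)
    case empty
    then show ?case using constA[of 0] rconst[of 0] by simp
  next
    case (insert x G)
    then have tx: "t x \<in> A2.Alg" and IH: "(\<lambda>n. \<Sum>y\<in>G. t y n) \<in> A2.Alg" "\<rho> (\<lambda>n. \<Sum>y\<in>G. t y n) = (\<Sum>y\<in>G. \<rho> (t y))"
      by auto
    have eq: "(\<lambda>n. \<Sum>y\<in>insert x G. t y n) = (\<lambda>n. t x n + (\<Sum>y\<in>G. t y n))"
      using insert(1,2) by simp
    show ?case unfolding eq
      using ucs_add[OF A2.Alg_cstar tx IH(1)] radd[OF tx IH(1)] IH(2) insert(1,2) by simp
  qed
  define t where "t y n = k y (\<kappa> n) * cnj (k y (\<kappa> n))" for y n
  have tA: "t y \<in> A2.Alg" if "y \<in> F" for y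
  proof -
    have "y \<in> Y" using that F(1) by blast
    then have "continuous_on Y (\<lambda>x. k y x * cnj (k y x))" using kc by (intro continuous_intros) auto
    from in_Alg[OF this] show ?thesis by (simp add: t_def[abs_def])
  qed
  have t\<rho>: "\<rho> (t y) = 0" if "y \<in> F" for y
  proof -
    have y: "y \<in> Y" using that F(1) by blast
    have cA: "(\<lambda>n. cnj (k y (\<kappa> n))) \<in> A2.Alg" using kc[OF y] by (intro in_Alg continuous_intros)
    have "t y = (\<lambda>n. k y (\<kappa> n) * cnj (k y (\<kappa> n)))" by (simp add: t_def[abs_def])
    then have "\<rho> (t y) = \<rho> (\<lambda>n. k y (\<kappa> n)) * \<rho> (\<lambda>n. cnj (k y (\<kappa> n)))"
      using rmult[OF kA[OF y] cA] by simp
    then show ?thesis using k\<rho>[OF y] by simp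
  qed
  have gk: "(\<lambda>n. g (\<kappa> n)) = (\<lambda>n. \<Sum>y\<in>F. t y n)" by (simp add: g_def t_def)
  have g\<rho>: "\<rho> (\<lambda>n. g (\<kappa> n)) = 0"
    unfolding gk using sumL[OF F(2), of t] tA t\<rho> by simp
  define gi where "gi x = 1 / g x" for x
  have gic: "continuous_on Y gi" unfolding gi_def using gc gnz by (intro continuous_intros) auto
  have prod1: "(\<lambda>n. g (\<kappa> n) * gi (\<kappa> n)) = (\<lambda>_. 1)"
    using gnz A2.p_in by (simp add: gi_def fun_eq_iff)
  have "1 = \<rho> (\<lambda>n. g (\<kappa> n) * gi (\<kappa> n))" using rone prod1 by simp
  also have "\<dots> = \<rho> (\<lambda>n. g (\<kappa> n)) * \<rho> (\<lambda>n. gi (\<kappa> n))"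
    by (rule rmult[OF in_Alg[OF gc] in_Alg[OF gic]])
  also have "\<dots> = 0" using g\<rho> by simp
  finally show False by simp
qed

end


context setting begin

lemma topsp: "topspace (max_ideal_space A2.Alg) = characters A2.Alg"
proof -
  have "characters A2.Alg \<subseteq> PiE A2.Alg (\<lambda>_. UNIV)"
  proof
    fix \<rho> assume "\<rho> \<in> characters A2.Alg"
    then have "\<rho> \<in> extensional A2.Alg" by (simp add: characters_def)
    then show "\<rho> \<in> PiE A2.Alg (\<lambda>_. UNIV)" by (simp add: PiE_iff)
  qed
  then show ?thesis unfolding max_ideal_space_def topspace_subtopology topspace_product_topology topspace_euclidean
    by blast
qed

lemma E_ext: "E y \<in> extensional A2.Alg"
  unfolding E_def by (rule restrict_extensional)

lemma E_cont: "continuous_map (top_of_set Y) (max_ideal_space A2.Alg) E"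
  unfolding max_ideal_space_def continuous_map_in_subtopology
proof
  show "continuous_map (top_of_set Y) (product_topology (\<lambda>_. euclidean) A2.Alg) E"
    unfolding continuous_map_componentwise
  proof
    show "E ` topspace (top_of_set Y) \<subseteq> extensional A2.Alg" using E_ext by blast
    show "\<forall>k\<in>A2.Alg. continuous_map (top_of_set Y) euclidean (\<lambda>x. E x k)"
    proof
      fix a assume a: "a \<in> A2.Alg"
      have "(\<lambda>x. E x a) = rep a" using E_rep[OF a] by (simp add: fun_eq_iff)
      then show "continuous_map (top_of_set Y) euclidean (\<lambda>x. E x a)"
        using rep_cont[OF a] by (simp add: continuous_map_iff_continuous)
    qed
  qed
  show "E \<in> topspace (top_of_set Y) \<rightarrow> characters A2.Alg" using E_char by auto
qed

lemma E_image: "E ` Y = characters A2.Alg"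
proof
  show "E ` Y \<subseteq> characters A2.Alg" using E_char by blast
  show "characters A2.Alg \<subseteq> E ` Y"
  proof
    fix \<rho> assume "\<rho> \<in> characters A2.Alg"
    then obtain y where "y \<in> Y" "E y = \<rho>" using E_surj by blast
    then show "\<rho> \<in> E ` Y" by blast
  qed
qed

lemma E_hom: "homeomorphic_map (top_of_set Y) (max_ideal_space A2.Alg) E"
proof (rule continuous_imp_homeomorphic_map[OF E_cont])
  show "compact_space (top_of_set Y)"
    by (rule compact_space_subtopology) (simp add: compactin_euclidean_iff Y_compact)
  show "Hausdorff_space (max_ideal_space A2.Alg)" unfolding max_ideal_space_def
    by (rule Hausdorff_space_subtopology) (simp add: Hausdorff_space_product_topology)
  show "E ` topspace (top_of_set Y) = topspace (max_ideal_space A2.Alg)"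
    unfolding topsp using E_image by simp
  show "inj_on E (topspace (top_of_set Y))" using E_inj by (auto intro: inj_onI)
qed

lemma E_iota: "E (\<kappa> n) = iota A2.Alg n"
proof (rule extensionalityI[OF E_ext])
  show "iota A2.Alg n \<in> extensional A2.Alg" unfolding iota_def by (rule restrict_extensional)
  fix a assume a: "a \<in> A2.Alg"
  show "E (\<kappa> n) a = iota A2.Alg n a"
    using E_rep[OF a] rep_app[OF a, of n] a by (simp add: iota_def)
qed

lemma E_mapA: "y \<in> Y \<Longrightarrow> mapA A2.Alg (E y) = E (B y)"
proof (rule extensionalityI[OF _ E_ext])
  assume y: "y \<in> Y"
  show "mapA A2.Alg (E y) \<in> extensional A2.Alg" unfolding mapA_def by (rule restrict_extensional)
  fix a assume a: "a \<in> A2.Alg"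
  have sh: "shiftA a = (\<lambda>n. (rep a \<circ> B) (\<kappa> n))"
  proof
    fix n show "shiftA a n = (rep a \<circ> B) (\<kappa> n)"
      using rep_app[OF a, of "Suc n"] by (simp add: shiftA_def B_\<kappa>)
  qed
  have "E y (shiftA a) = (rep a \<circ> B) y"
    by (rule E_comp'[OF cont_B[OF rep_cont[OF a]] y sh])
  then show "mapA A2.Alg (E y) a = E (B y) a"
    using a E_rep[OF a] by (simp add: mapA_def)
qed

lemma part3:
  "\<exists>\<Phi>. homeomorphic_map (max_ideal_space (anqie_gen (f ` \<Lambda>))) (top_of_set Y) \<Phi> \<and>
          (\<forall>n. \<Phi> (iota (anqie_gen (f ` \<Lambda>)) n) = \<kappa> n) \<and>
          (\<forall>\<rho> \<in> characters (anqie_gen (f ` \<Lambda>)).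
              \<Phi> (mapA (anqie_gen (f ` \<Lambda>)) \<rho>) = B (\<Phi> \<rho>))"
   "anqie_entropy (f ` \<Lambda>) = topological_entropy (top_of_set Y) B"
proof -
  obtain \<Phi> where \<Phi>: "homeomorphic_maps (top_of_set Y) (max_ideal_space A2.Alg) E \<Phi>"
    using E_hom homeomorphic_map_maps by blast
  then have \<Phi>hom: "homeomorphic_map (max_ideal_space A2.Alg) (top_of_set Y) \<Phi>"
    and \<Phi>E: "\<And>y. y \<in> Y \<Longrightarrow> \<Phi> (E y) = y"
    and E\<Phi>: "\<And>\<rho>. \<rho> \<in> characters A2.Alg \<Longrightarrow> E (\<Phi> \<rho>) = \<rho>"
    unfolding homeomorphic_maps_map topsp by auto
  have \<Phi>Y: "\<Phi> \<rho> \<in> Y" if "\<rho> \<in> characters A2.Alg" for \<rho>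
    using homeomorphic_imp_surjective_map[OF \<Phi>hom] that unfolding topsp by auto
  have iota: "\<Phi> (iota A2.Alg n) = \<kappa> n" for n
    using \<Phi>E[OF A2.p_in[of n]] E_iota by simp
  have mapA: "\<Phi> (mapA A2.Alg \<rho>) = B (\<Phi> \<rho>)" if \<rho>: "\<rho> \<in> characters A2.Alg" for \<rho>
  proof -
    have "mapA A2.Alg \<rho> = E (B (\<Phi> \<rho>))" using E_mapA[OF \<Phi>Y[OF \<rho>]] E\<Phi>[OF \<rho>] by simp
    then show ?thesis using \<Phi>E[OF BY[OF \<Phi>Y[OF \<rho>]]] by simp
  qed
  show "\<exists>\<Phi>. homeomorphic_map (max_ideal_space (anqie_gen (f ` \<Lambda>))) (top_of_set Y) \<Phi> \<and>
          (\<forall>n. \<Phi> (iota (anqie_gen (f ` \<Lambda>)) n) = \<kappa> n) \<and>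
          (\<forall>\<rho> \<in> characters (anqie_gen (f ` \<Lambda>)).
              \<Phi> (mapA (anqie_gen (f ` \<Lambda>)) \<rho>) = B (\<Phi> \<rho>))"
    unfolding anqie_eq using \<Phi>hom iota mapA by blast
  have le1: "topological_entropy (max_ideal_space A2.Alg) (mapA A2.Alg) \<le> topological_entropy (top_of_set Y) B"
  proof (rule entropy_conj_le[OF E_hom])
    show "B x \<in> topspace (top_of_set Y)" if "x \<in> topspace (top_of_set Y)" for x
      using that BY by simp
    show "E (B x) = mapA A2.Alg (E x)" if "x \<in> topspace (top_of_set Y)" for x
      using that E_mapA by simp
  qed
  have le2: "topological_entropy (top_of_set Y) B \<le> topological_entropy (max_ideal_space A2.Alg) (mapA A2.Alg)"
  proof (rule entropy_conj_le[OF \<Phi>hom])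
    show "mapA A2.Alg x \<in> topspace (max_ideal_space A2.Alg)" if "x \<in> topspace (max_ideal_space A2.Alg)" for x
    proof -
      have x: "x \<in> characters A2.Alg" using that topsp by simp
      have "mapA A2.Alg x = E (B (\<Phi> x))" using E_mapA[OF \<Phi>Y[OF x]] E\<Phi>[OF x] by simp
      then show ?thesis unfolding topsp using E_char[OF BY[OF \<Phi>Y[OF x]]] by simp
    qed
    show "\<Phi> (mapA A2.Alg x) = B (\<Phi> x)" if "x \<in> topspace (max_ideal_space A2.Alg)" for x
      using that topsp mapA by simp
  qed
  show "anqie_entropy (f ` \<Lambda>) = topological_entropy (top_of_set Y) B"
    unfolding anqie_entropy_def anqie_eq using le1 le2 by (rule antisym)
qed

end

theorem theorem3p3:
  fixes f :: "'l \<Rightarrow> nat \<Rightarrow> complex" and \<Lambda> :: "'l set"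
    and z :: "nat \<Rightarrow> ('l \<Rightarrow> complex)"
    and \<kappa> :: "nat \<Rightarrow> (nat \<Rightarrow> ('l \<Rightarrow> complex))"
    and X0 :: "('l \<Rightarrow> complex) set" and Y :: "(nat \<Rightarrow> ('l \<Rightarrow> complex)) set"
    and B :: "(nat \<Rightarrow> ('l \<Rightarrow> complex)) \<Rightarrow> (nat \<Rightarrow> ('l \<Rightarrow> complex))"
  assumes bdd: "\<And>l. l \<in> \<Lambda> \<Longrightarrow> bounded_seq (f l)"
    and z_def: "\<And>n. z n = restrict (\<lambda>l. f l n) \<Lambda>"
    and X0_def: "X0 = closure (range z)"
    and \<kappa>_def: "\<And>n. \<kappa> n = (\<lambda>k. z (n + k))"
    and Y_def: "Y = closure (range \<kappa>)"
    and B_def: "\<And>\<omega>. B \<omega> = (\<lambda>k. \<omega> (Suc k))"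
  shows
    "((\<lambda>g. g \<circ> z) ` {g. continuous_on X0 g} = cstar_gen (f ` \<Lambda>) \<and>
      (\<forall>g h :: ('l \<Rightarrow> complex) \<Rightarrow> complex. continuous_on X0 g \<and> continuous_on X0 h \<and> g \<circ> z = h \<circ> z
              \<longrightarrow> (\<forall>x\<in>X0. g x = h x)))
   \<and> ((\<lambda>h. h \<circ> \<kappa>) ` {h. continuous_on Y h} = anqie_gen (f ` \<Lambda>) \<and>
      (\<forall>g h :: (nat \<Rightarrow> ('l \<Rightarrow> complex)) \<Rightarrow> complex. continuous_on Y g \<and> continuous_on Y h \<and> g \<circ> \<kappa> = h \<circ> \<kappa>
              \<longrightarrow> (\<forall>y\<in>Y. g y = h y)))
   \<and> (\<exists>\<Phi>. homeomorphic_map (max_ideal_space (anqie_gen (f ` \<Lambda>))) (top_of_set Y) \<Phi> \<and>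
          (\<forall>n. \<Phi> (iota (anqie_gen (f ` \<Lambda>)) n) = \<kappa> n) \<and>
          (\<forall>\<rho> \<in> characters (anqie_gen (f ` \<Lambda>)).
              \<Phi> (mapA (anqie_gen (f ` \<Lambda>)) \<rho>) = B (\<Phi> \<rho>)))
   \<and> anqie_entropy (f ` \<Lambda>) = topological_entropy (top_of_set Y) B"
proof -
  interpret S: setting f \<Lambda> z \<kappa> X0 Y B
    by (rule setting.intro) (fact bdd z_def X0_def \<kappa>_def Y_def B_def)+
  have u1: "\<forall>g h :: ('l \<Rightarrow> complex) \<Rightarrow> complex. continuous_on X0 g \<and> continuous_on X0 h \<and> g \<circ> z = h \<circ> z
              \<longrightarrow> (\<forall>x\<in>X0. g x = h x)"
    using S.part1u by blast
  have u2: "\<forall>g h :: (nat \<Rightarrow> ('l \<Rightarrow> complex)) \<Rightarrow> complex. continuous_on Y g \<and> continuous_on Y h \<and> g \<circ> \<kappa> = h \<circ> \<kappa>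
              \<longrightarrow> (\<forall>y\<in>Y. g y = h y)"
    using S.part2u by blast
  show ?thesis using S.part1 u1 S.part2 u2 S.part3 by blast
qed

end
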